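(* For every integer $n\ge0$, the Franel number $\sum_{k=0}^n\binom{n}{k}^3$ equals the coefficient of $x_1^nx_2^nx_3^n$ in the Taylor expansion of $$\frac{1}{1-(x_1+x_2+x_3)+4x_1x_2x_3}.$$ Moreover, for $n_1,n_2,n_3\ge0$, the coefficient of $x_1^{n_1}x_2^{n_2}x_3^{n_3}$ in this rational function equals the coefficient of $x_1^{n_1}x_2^{n_2}x_3^{n_3}$ in $(x_1-x_2-x_3)^{n_1}(x_2-x_1-x_3)^{n_2}(x_3-x_1-x_2)^{n_3}$. *)

theory Defs
  imports "HOL-Computational_Algebra.Formal_Power_Series"
begin

text \<open>Formal power series in three variables x1, x2, x3 over the rationals, encoded as
  nested univariate formal power series: x1 is the outermost variable, x3 the innermost.\<close>

type_synonym fps3 = "rat fps fps fps"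

definition X1 :: fps3 where "X1 = fps_X"
definition X2 :: fps3 where "X2 = fps_const fps_X"
definition X3 :: fps3 where "X3 = fps_const (fps_const fps_X)"

definition coeff3 :: "fps3 \<Rightarrow> nat \<Rightarrow> nat \<Rightarrow> nat \<Rightarrow> rat" where
  "coeff3 F a b c = fps_nth (fps_nth (fps_nth F a) b) c"

definition franel_gf :: fps3 where
  "franel_gf = inverse (1 - (X1 + X2 + X3) + 4 * X1 * X2 * X3)"

end

theory Submission
  imports Defs
begin

unbundle fps_syntax



lemma coeff3_eqI: "(\<And>a b c. coeff3 F a b c = coeff3 G a b c) \<Longrightarrow> F = G"
  unfolding coeff3_def by (intro fps_ext) simp

lemma coeff3_add[simp]: "coeff3 (F + G) a b c = coeff3 F a b c + coeff3 G a b c"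
  by (simp add: coeff3_def)
lemma coeff3_diff[simp]: "coeff3 (F - G) a b c = coeff3 F a b c - coeff3 G a b c"
  by (simp add: coeff3_def)
lemma coeff3_minus[simp]: "coeff3 (- F) a b c = - coeff3 F a b c"
  by (simp add: coeff3_def)
lemma coeff3_one[simp]: "coeff3 1 a b c = (if a = 0 \<and> b = 0 \<and> c = 0 then 1 else 0)"
  by (simp add: coeff3_def)
lemma coeff3_sum: "coeff3 (sum f S) a b c = (\<Sum>i\<in>S. coeff3 (f i) a b c)"
  by (simp add: coeff3_def fps_sum_nth)
lemma coeff3_X1[simp]: "coeff3 (X1 * F) a b c = (if a = 0 then 0 else coeff3 F (a-1) b c)"
  by (simp add: coeff3_def X1_def)
lemma coeff3_X2[simp]: "coeff3 (X2 * F) a b c = (if b = 0 then 0 else coeff3 F a (b-1) c)"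
  by (simp add: coeff3_def X2_def)
lemma coeff3_X3[simp]: "coeff3 (X3 * F) a b c = (if c = 0 then 0 else coeff3 F a b (c-1))"
  by (simp add: coeff3_def X3_def)
lemma coeff3_const[simp]: "coeff3 (fps_const (fps_const (fps_const r)) * F) a b c = r * coeff3 F a b c"
  by (simp add: coeff3_def)
lemma coeff3_X1p: "coeff3 (X1^p * F) a b c = (if a < p then 0 else coeff3 F (a-p) b c)"
  by (simp add: coeff3_def X1_def fps_X_power_mult_nth)
lemma coeff3_X2p: "coeff3 (X2^p * F) a b c = (if b < p then 0 else coeff3 F a (b-p) c)"
  by (simp add: coeff3_def X2_def fps_X_power_mult_nth)
lemma coeff3_X3p: "coeff3 (X3^p * F) a b c = (if c < p then 0 else coeff3 F a b (c-p))"
  by (simp add: coeff3_def X3_def fps_X_power_mult_nth)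

lemma numeral_fps3: "(numeral k :: fps3) = fps_const (fps_const (fps_const (numeral k)))"
  by (simp add: numeral_fps_const)

lemma inv1:
  fixes f :: "'a::{comm_ring_1,inverse} fps"
  assumes "f $ 0 * inverse (f $ 0) = 1" shows "f * inverse f = 1"
  using fps_right_inverse[OF assms] by (simp add: fps_inverse_def)

definition Q :: fps3 where "Q = 1 - (X1 + X2 + X3) + 4 * X1 * X2 * X3"

lemma Q_inv: "Q * franel_gf = 1"
proof -
  have 0: "Q $ 0 $ 0 $ 0 = 1" by (simp add: Q_def X1_def X2_def X3_def numeral_fps_const)
  have 1: "Q $ 0 $ 0 * inverse (Q $ 0 $ 0) = 1" by (rule inv1) (simp add: 0)
  have 2: "Q $ 0 * inverse (Q $ 0) = 1" by (rule inv1) (simp add: 1)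
  show ?thesis unfolding franel_gf_def Q_def[symmetric] by (rule inv1) (simp add: 2)
qed

lemma inverse_unique: assumes "D * Q = 1" shows "D = franel_gf"
proof -
  have "D = D * (Q * franel_gf)" by (simp add: Q_inv)
  also have "\<dots> = franel_gf" by (simp add: mult.assoc[symmetric] assms)
  finally show ?thesis .
qed

definition mk3 :: "(nat \<Rightarrow> nat \<Rightarrow> nat \<Rightarrow> rat) \<Rightarrow> fps3" where
  "mk3 f = Abs_fps (\<lambda>a. Abs_fps (\<lambda>b. Abs_fps (\<lambda>c. f a b c)))"
lemma coeff3_mk3[simp]: "coeff3 (mk3 f) a b c = f a b c" by (simp add: mk3_def coeff3_def)

definition B1 :: "(nat \<Rightarrow> nat \<Rightarrow> nat \<Rightarrow> rat) \<Rightarrow> nat \<Rightarrow> nat \<Rightarrow> nat \<Rightarrow> rat" where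
  "B1 f a b c = (if a = 0 then 0 else f (a-1) b c)"
definition B2 :: "(nat \<Rightarrow> nat \<Rightarrow> nat \<Rightarrow> rat) \<Rightarrow> nat \<Rightarrow> nat \<Rightarrow> nat \<Rightarrow> rat" where
  "B2 f a b c = (if b = 0 then 0 else f a (b-1) c)"
definition B3 :: "(nat \<Rightarrow> nat \<Rightarrow> nat \<Rightarrow> rat) \<Rightarrow> nat \<Rightarrow> nat \<Rightarrow> nat \<Rightarrow> rat" where
  "B3 f a b c = (if c = 0 then 0 else f a b (c-1))"
definition delta :: "nat \<Rightarrow> nat \<Rightarrow> nat \<Rightarrow> rat" where
  "delta a b c = (if a = 0 \<and> b = 0 \<and> c = 0 then 1 else 0)"

lemma rec_to_gf:
  assumes "\<And>a b c. f a b c - B1 f a b c - B2 f a b c - B3 f a b c + 4 * B1 (B2 (B3 f)) a b c = delta a b c"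
  shows "mk3 f = franel_gf"
proof (rule inverse_unique, rule coeff3_eqI)
  fix a b c
  have "mk3 f * Q = mk3 f - X1 * mk3 f - X2 * mk3 f - X3 * mk3 f
     + fps_const (fps_const (fps_const 4)) * (X1 * (X2 * (X3 * mk3 f)))"
    by (simp add: Q_def numeral_fps3 algebra_simps)
  then have "coeff3 (mk3 f * Q) a b c = f a b c - B1 f a b c - B2 f a b c - B3 f a b c + 4 * B1 (B2 (B3 f)) a b c"
    by (simp add: B1_def B2_def B3_def)
  then show "coeff3 (mk3 f * Q) a b c = coeff3 1 a b c"
    using assms[of a b c] by (simp add: delta_def)
qed


definition Tn :: "(nat \<Rightarrow> rat) \<Rightarrow> nat \<Rightarrow> rat" where
  "Tn h n = (\<Sum>m\<le>n. of_nat (n choose m) * 2^(n-m) * h m)"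

lemma Tn_Suc: "Tn h (Suc n) = 2 * Tn h n + Tn (\<lambda>m. h (Suc m)) n"
proof -
  have A: "Tn h (Suc n) = 2^(Suc n) * h 0 + (\<Sum>k\<le>n. (of_nat (n choose k) + of_nat (n choose Suc k)) * 2^(n-k) * h (Suc k))"
    unfolding Tn_def by (subst sum.atMost_Suc_shift) simp
  have B: "(\<Sum>k\<le>n. (of_nat (n choose k) + of_nat (n choose Suc k)) * 2^(n-k) * h (Suc k)) =
     (\<Sum>k\<le>n. of_nat (n choose k) * 2^(n-k) * h (Suc k)) + (\<Sum>k\<le>n. of_nat (n choose Suc k) * 2^(n-k) * h (Suc k))"
    by (simp add: sum.distrib[symmetric] algebra_simps)
  have C: "2 * Tn h n = (\<Sum>m\<le>Suc n. of_nat (n choose m) * 2^(Suc n-m) * h m)"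
  proof -
    have "2 * Tn h n = (\<Sum>m\<le>n. of_nat (n choose m) * 2^(Suc n-m) * h m)"
      unfolding Tn_def sum_distrib_left
      by (rule sum.cong) (auto simp: Suc_diff_le)
    also have "\<dots> = (\<Sum>m\<le>Suc n. of_nat (n choose m) * 2^(Suc n-m) * h m)"
      by simp
    finally show ?thesis .
  qed
  have D: "(\<Sum>m\<le>Suc n. of_nat (n choose m) * 2^(Suc n-m) * h m) = 2^(Suc n) * h 0 + (\<Sum>k\<le>n. of_nat (n choose Suc k) * 2^(n-k) * h (Suc k))"
    by (subst sum.atMost_Suc_shift) simp
  show ?thesis using A B C D by (simp add: Tn_def)
qed

lemma Tn_B: "Tn (\<lambda>m. if m = 0 then 0 else h (m-1)) n - 2 * (if n = 0 then 0 else Tn (\<lambda>m. if m = 0 then 0 else h (m-1)) (n-1))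
   = (if n = 0 then 0 else Tn h (n-1))"
proof (cases n)
  case 0 then show ?thesis by (simp add: Tn_def)
next
  case (Suc k)
  then show ?thesis by (simp add: Tn_Suc)
qed

lemma Tn_delta: "Tn (\<lambda>m. if m = 0 then 1 else 0) n = 2^n"
proof -
  have "Tn (\<lambda>m. if m = 0 then 1 else 0) n = (\<Sum>m\<in>{..n}. if m = 0 then 2^n else 0)"
    unfolding Tn_def by (rule sum.cong) auto
  then show ?thesis by simp
qed


type_synonym arr = "nat \<Rightarrow> nat \<Rightarrow> nat \<Rightarrow> rat"

definition T1 :: "arr \<Rightarrow> arr" where "T1 h a b c = Tn (\<lambda>m. h m b c) a"
definition T2 :: "arr \<Rightarrow> arr" where "T2 h a b c = Tn (\<lambda>m. h a m c) b"
definition T3 :: "arr \<Rightarrow> arr" where "T3 h a b c = Tn (\<lambda>m. h a b m) c"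
definition K1 :: "arr \<Rightarrow> arr" where "K1 F a b c = F a b c - 2 * B1 F a b c"
definition K2 :: "arr \<Rightarrow> arr" where "K2 F a b c = F a b c - 2 * B2 F a b c"
definition K3 :: "arr \<Rightarrow> arr" where "K3 F a b c = F a b c - 2 * B3 F a b c"

lemma Tn_0[simp]: "Tn f 0 = f 0" by (simp add: Tn_def)
lemma Tn_zero[simp]: "Tn (\<lambda>m. 0) n = 0" by (simp add: Tn_def)
lemma Tn_diff: "Tn (\<lambda>m. f m - 2 * g m) n = Tn f n - 2 * Tn g n"
  by (simp add: Tn_def sum_subtractf sum_distrib_left algebra_simps)
lemma Tn_add: "Tn (\<lambda>m. f m + g m) n = Tn f n + Tn g n"
  by (simp add: Tn_def sum.distrib algebra_simps)

lemma B1T1: "B1 (T1 h) = K1 (T1 (B1 h))"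
proof (intro ext)
  fix a b c
  show "B1 (T1 h) a b c = K1 (T1 (B1 h)) a b c"
    using Tn_B[of "\<lambda>m. h m b c" a] by (cases a) (simp_all add: B1_def K1_def T1_def)
qed
lemma B2T2: "B2 (T2 h) = K2 (T2 (B2 h))"
proof (intro ext)
  fix a b c
  show "B2 (T2 h) a b c = K2 (T2 (B2 h)) a b c"
    using Tn_B[of "\<lambda>m. h a m c" b] by (cases b) (simp_all add: B2_def K2_def T2_def)
qed
lemma B3T3: "B3 (T3 h) = K3 (T3 (B3 h))"
proof (intro ext)
  fix a b c
  show "B3 (T3 h) a b c = K3 (T3 (B3 h)) a b c"
    using Tn_B[of "\<lambda>m. h a b m" c] by (cases c) (simp_all add: B3_def K3_def T3_def)
qed

lemma B1T2: "B1 (T2 h) = T2 (B1 h)" by (intro ext) (simp add: B1_def T2_def)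
lemma B1T3: "B1 (T3 h) = T3 (B1 h)" by (intro ext) (simp add: B1_def T3_def)
lemma B2T1: "B2 (T1 h) = T1 (B2 h)" by (intro ext) (simp add: B2_def T1_def)
lemma B2T3: "B2 (T3 h) = T3 (B2 h)" by (intro ext) (simp add: B2_def T3_def)
lemma B3T1: "B3 (T1 h) = T1 (B3 h)" by (intro ext) (simp add: B3_def T1_def)
lemma B3T2: "B3 (T2 h) = T2 (B3 h)" by (intro ext) (simp add: B3_def T2_def)

lemma K1T2: "K1 (T2 h) = T2 (K1 h)" by (intro ext) (simp add: K1_def B1_def T2_def Tn_diff)
lemma K1T3: "K1 (T3 h) = T3 (K1 h)" by (intro ext) (simp add: K1_def B1_def T3_def Tn_diff)
lemma K2T1: "K2 (T1 h) = T1 (K2 h)" by (intro ext) (simp add: K2_def B2_def T1_def Tn_diff)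
lemma K2T3: "K2 (T3 h) = T3 (K2 h)" by (intro ext) (simp add: K2_def B2_def T3_def Tn_diff)
lemma K3T1: "K3 (T1 h) = T1 (K3 h)" by (intro ext) (simp add: K3_def B3_def T1_def Tn_diff)
lemma K3T2: "K3 (T2 h) = T2 (K3 h)" by (intro ext) (simp add: K3_def B3_def T2_def Tn_diff)

lemma B1K2: "B1 (K2 h) = K2 (B1 h)" by (intro ext) (simp add: K2_def B1_def B2_def)
lemma B1K3: "B1 (K3 h) = K3 (B1 h)" by (intro ext) (simp add: K3_def B1_def B3_def)
lemma B2K1: "B2 (K1 h) = K1 (B2 h)" by (intro ext) (simp add: K1_def B1_def B2_def)
lemma B2K3: "B2 (K3 h) = K3 (B2 h)" by (intro ext) (simp add: K3_def B2_def B3_def)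
lemma B3K1: "B3 (K1 h) = K1 (B3 h)" by (intro ext) (simp add: K1_def B1_def B3_def)
lemma B3K2: "B3 (K2 h) = K2 (B3 h)" by (intro ext) (simp add: K2_def B2_def B3_def)
lemma K3K2: "K3 (K2 h) = K2 (K3 h)" by (intro ext) (simp add: K2_def K3_def B2_def B3_def algebra_simps)

definition LL :: "arr \<Rightarrow> arr" where "LL X = K1 (K2 (K3 (T1 (T2 (T3 X)))))"

lemma LL_add: "LL (\<lambda>a b c. X a b c + Y a b c) a b c = LL X a b c + LL Y a b c"
  by (simp add: LL_def K1_def K2_def K3_def B1_def B2_def B3_def T1_def T2_def T3_def Tn_add algebra_simps)

lemma Tn_delta': "Tn (\<lambda>m. if m = 0 then x else 0) n = 2^n * x"
proof -
  have "Tn (\<lambda>m. if m = 0 then x else 0) n = (\<Sum>m\<in>{..n}. if m = 0 then 2^n * x else 0)"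
    unfolding Tn_def by (rule sum.cong) auto
  then show ?thesis by simp
qed

lemma LL_delta: "LL delta = delta"
proof (intro ext)
  fix a b c
  have 3: "T3 delta = (\<lambda>a b c. if b = 0 then (if a = 0 then 2^c else 0) else 0)"
  proof (intro ext)
    fix a b c show "T3 delta a b c = (if b = 0 then (if a = 0 then 2^c else 0) else 0)"
      using Tn_delta'[of 1 c] by (simp add: T3_def delta_def)
  qed
  have 2: "T2 (T3 delta) = (\<lambda>a b c. if a = 0 then 2^b * 2^c else 0)"
  proof (intro ext)
    fix a b c show "T2 (T3 delta) a b c = (if a = 0 then 2^b * 2^c else 0)"
      using Tn_delta'[of "if a = 0 then 2^c else 0" b] by (simp add: T2_def 3)
  qed
  have 1: "T1 (T2 (T3 delta)) a b c = 2^a * 2^b * 2^c" for a b c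
      using Tn_delta'[of "2^b * 2^c" a] by (simp add: T1_def 2 mult.assoc)
  show "LL delta a b c = delta a b c"
    by (cases a; cases b; cases c) (simp_all add: LL_def K1_def K2_def K3_def B1_def B2_def B3_def delta_def 1)
qed

lemma opid: "F a b c - B1 F a b c - B2 F a b c - B3 F a b c + 4 * B1 (B2 (B3 F)) a b c =
   K1 (K2 (K3 F)) a b c + B1 (K2 (K3 F)) a b c + B2 (K1 (K3 F)) a b c + B3 (K1 (K2 F)) a b c"
  by (cases a; cases b; cases c) (simp_all add: K1_def K2_def K3_def B1_def B2_def B3_def)

lemma main_rec:
  assumes g: "\<And>a b c. g a b c + B1 g a b c + B2 g a b c + B3 g a b c = delta a b c"
  defines "Y \<equiv> T1 (T2 (T3 g))"
  shows "Y a b c - B1 Y a b c - B2 Y a b c - B3 Y a b c + 4 * B1 (B2 (B3 Y)) a b c = delta a b c"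
proof -
  have e0: "K1 (K2 (K3 Y)) = LL g" by (simp add: Y_def LL_def)
  have e1: "B1 (K2 (K3 Y)) = LL (B1 g)"
    by (simp add: Y_def LL_def K3T1 K2T1 B1T1 B1K2 B1K3 B1T2 B1T3)
  have e2: "B2 (K1 (K3 Y)) = LL (B2 g)"
    by (simp add: Y_def LL_def K3T1 K2T1 B2K1 B2K3 B2T1 B2T2 B2T3 K3T2 K3K2)
  have e3: "B3 (K1 (K2 Y)) = LL (B3 g)"
    by (simp add: Y_def LL_def K3T1 K2T1 B3K1 B3K2 B3T1 B3T2 B3T3 K2T3 K3T2 K3K2)
  have gs: "(\<lambda>a b c. g a b c + B1 g a b c + B2 g a b c + B3 g a b c) = delta"
    using g by (intro ext) simp
  have "LL g a b c + LL (B1 g) a b c + LL (B2 g) a b c + LL (B3 g) a b c = LL delta a b c"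
    by (simp add: LL_add[symmetric] gs[symmetric])
  then show ?thesis using opid[of Y a b c] e0 e1 e2 e3 LL_delta by simp
qed


definition S :: fps3 where "S = X1 + X2 + X3"
abbreviation cst :: "rat \<Rightarrow> fps3" where "cst r \<equiv> fps_const (fps_const (fps_const r))"

definition gg :: arr where "gg a b c = coeff3 ((- S) ^ (a + b + c)) a b c"

lemma gg_rec: "gg a b c + B1 gg a b c + B2 gg a b c + B3 gg a b c = delta a b c"
proof (cases "a + b + c")
  case 0 then show ?thesis by (simp add: gg_def B1_def B2_def B3_def delta_def)
next
  case (Suc N)
  have P: "(- S) ^ Suc N = - (X1 * (-S)^N) - X2 * (-S)^N - X3 * (-S)^N"
    by (simp add: S_def algebra_simps)
  have b1: "B1 gg a b c = (if a = 0 then 0 else coeff3 ((-S)^N) (a-1) b c)"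
    using Suc by (cases a) (simp_all add: B1_def gg_def)
  have b2: "B2 gg a b c = (if b = 0 then 0 else coeff3 ((-S)^N) a (b-1) c)"
    using Suc by (cases b) (simp_all add: B2_def gg_def)
  have b3: "B3 gg a b c = (if c = 0 then 0 else coeff3 ((-S)^N) a b (c-1))"
    using Suc by (cases c) (simp_all add: B3_def gg_def)
  have "gg a b c = - B1 gg a b c - B2 gg a b c - B3 gg a b c"
    unfolding gg_def[of a b c] Suc P b1 b2 b3 by simp
  then show ?thesis using Suc by (auto simp add: delta_def)
qed

lemma of_nat_fps3: "(of_nat n :: fps3) = cst (of_nat n)"
  by (simp add: fps_of_nat)

lemma expand1: "(X1 - X2 - X3)^a = (\<Sum>i\<le>a. cst (of_nat (a choose i) * 2^(a-i)) * (X1^(a-i) * (-S)^i))"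
proof -
  have "X1 - X2 - X3 = (-S) + cst 2 * X1" by (simp add: S_def numeral_fps3[symmetric])
  then have "(X1 - X2 - X3)^a = (\<Sum>i\<le>a. of_nat (a choose i) * (-S)^i * (cst 2 * X1)^(a-i))"
    by (simp only: binomial_ring)
  also have "\<dots> = (\<Sum>i\<le>a. cst (of_nat (a choose i) * 2^(a-i)) * (X1^(a-i) * (-S)^i))"
    by (rule sum.cong) (simp_all add: of_nat_fps3 power_mult_distrib fps_const_mult[symmetric] ac_simps del: fps_const_mult)
  finally show ?thesis .
qed

lemma expand2: "(X2 - X1 - X3)^a = (\<Sum>i\<le>a. cst (of_nat (a choose i) * 2^(a-i)) * (X2^(a-i) * (-S)^i))"
proof -
  have "X2 - X1 - X3 = (-S) + cst 2 * X2" by (simp add: S_def numeral_fps3[symmetric])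
  then have "(X2 - X1 - X3)^a = (\<Sum>i\<le>a. of_nat (a choose i) * (-S)^i * (cst 2 * X2)^(a-i))"
    by (simp only: binomial_ring)
  also have "\<dots> = (\<Sum>i\<le>a. cst (of_nat (a choose i) * 2^(a-i)) * (X2^(a-i) * (-S)^i))"
    by (rule sum.cong) (simp_all add: of_nat_fps3 power_mult_distrib fps_const_mult[symmetric] ac_simps del: fps_const_mult)
  finally show ?thesis .
qed

lemma expand3: "(X3 - X1 - X2)^a = (\<Sum>i\<le>a. cst (of_nat (a choose i) * 2^(a-i)) * (X3^(a-i) * (-S)^i))"
proof -
  have "X3 - X1 - X2 = (-S) + cst 2 * X3" by (simp add: S_def numeral_fps3[symmetric])
  then have "(X3 - X1 - X2)^a = (\<Sum>i\<le>a. of_nat (a choose i) * (-S)^i * (cst 2 * X3)^(a-i))"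
    by (simp only: binomial_ring)
  also have "\<dots> = (\<Sum>i\<le>a. cst (of_nat (a choose i) * 2^(a-i)) * (X3^(a-i) * (-S)^i))"
    by (rule sum.cong) (simp_all add: of_nat_fps3 power_mult_distrib fps_const_mult[symmetric] ac_simps del: fps_const_mult)
  finally show ?thesis .
qed

lemma term_coeff:
  assumes "i \<le> a" "j \<le> b" "k \<le> c"
  shows "coeff3 (cst x * (X1^(a-i) * (-S)^i) * (cst y * (X2^(b-j) * (-S)^j)) * (cst z * (X3^(c-k) * (-S)^k))) a b c
     = x * (y * (z * gg i j k))"
proof -
  have eq: "cst x * (X1^(a-i) * (-S)^i) * (cst y * (X2^(b-j) * (-S)^j)) * (cst z * (X3^(c-k) * (-S)^k))
     = cst (x * (y * z)) * (X1^(a-i) * (X2^(b-j) * (X3^(c-k) * (-S)^(i+j+k))))"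
    by (simp add: power_add fps_const_mult[symmetric] ac_simps del: fps_const_mult)
  show ?thesis unfolding eq using assms
    by (auto simp add: coeff3_X1p coeff3_X2p coeff3_X3p gg_def)
qed

lemma prod3: "(\<Sum>i\<in>A. f i) * (\<Sum>j\<in>B. g j) * (\<Sum>k\<in>C. h k) = (\<Sum>i\<in>A. \<Sum>j\<in>B. \<Sum>k\<in>C. f i * g j * (h k :: fps3))"
proof -
  have "(\<Sum>i\<in>A. \<Sum>j\<in>B. \<Sum>k\<in>C. f i * g j * h k) = (\<Sum>i\<in>A. f i * (\<Sum>j\<in>B. g j * (\<Sum>k\<in>C. h k)))"
    by (simp add: sum_distrib_left mult.assoc)
  also have "\<dots> = (\<Sum>i\<in>A. f i) * (\<Sum>j\<in>B. g j) * (\<Sum>k\<in>C. h k)"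
    by (simp add: sum_distrib_right[symmetric] sum_distrib_left[symmetric] mult.assoc)
  finally show ?thesis by simp
qed

lemma coeffP: "coeff3 ((X1 - X2 - X3)^a * (X2 - X1 - X3)^b * (X3 - X1 - X2)^c) a b c = T1 (T2 (T3 gg)) a b c"
proof -
  have "coeff3 ((X1 - X2 - X3)^a * (X2 - X1 - X3)^b * (X3 - X1 - X2)^c) a b c =
     (\<Sum>i\<le>a. \<Sum>j\<le>b. \<Sum>k\<le>c. coeff3 (cst (of_nat (a choose i) * 2^(a-i)) * (X1^(a-i) * (-S)^i) *
        (cst (of_nat (b choose j) * 2^(b-j)) * (X2^(b-j) * (-S)^j)) *
        (cst (of_nat (c choose k) * 2^(c-k)) * (X3^(c-k) * (-S)^k))) a b c)"
    unfolding expand1 expand2 expand3 prod3 coeff3_sum ..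
  also have "\<dots> = (\<Sum>i\<le>a. \<Sum>j\<le>b. \<Sum>k\<le>c. (of_nat (a choose i) * 2^(a-i)) * ((of_nat (b choose j) * 2^(b-j)) * ((of_nat (c choose k) * 2^(c-k)) * gg i j k)))"
    by (intro sum.cong refl) (simp add: term_coeff)
  also have "\<dots> = T1 (T2 (T3 gg)) a b c"
    by (simp add: T1_def T2_def T3_def Tn_def sum_distrib_left mult.assoc)
  finally show ?thesis .
qed


definition M4 :: "nat \<Rightarrow> nat \<Rightarrow> nat \<Rightarrow> nat \<Rightarrow> rat" where
  "M4 j p q r = fact (j+p+q+r) / (fact j * fact p * fact q * fact r)"

lemma M4_dec1: "(if j = 0 then 0 else M4 (j-1) p q r) = of_nat j * fact (j+p+q+r-1) / (fact j * fact p * fact q * fact r)"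
  proof (cases j)
  case (Suc n)
  have "(of_nat j :: rat) \<noteq> 0" using Suc by simp
  then show ?thesis using Suc by (simp add: M4_def fact_reduce[of j] mult.assoc[symmetric])
qed simp
lemma M4_dec2: "(if p = 0 then 0 else M4 j (p-1) q r) = of_nat p * fact (j+p+q+r-1) / (fact j * fact p * fact q * fact r)"
  proof (cases p)
  case (Suc n)
  have "(of_nat p :: rat) \<noteq> 0" using Suc by simp
  then show ?thesis using Suc by (simp add: M4_def fact_reduce[of p] mult.assoc[symmetric] mult.commute[of _ "of_nat p"])
qed simp
lemma M4_dec3: "(if q = 0 then 0 else M4 j p (q-1) r) = of_nat q * fact (j+p+q+r-1) / (fact j * fact p * fact q * fact r)"
  proof (cases q)
  case (Suc n)
  have "(of_nat q :: rat) \<noteq> 0" using Suc by simp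
  then show ?thesis using Suc by (simp add: M4_def fact_reduce[of q] mult.assoc[symmetric] mult.commute[of _ "of_nat q"])
qed simp
lemma M4_dec4: "(if r = 0 then 0 else M4 j p q (r-1)) = of_nat r * fact (j+p+q+r-1) / (fact j * fact p * fact q * fact r)"
  proof (cases r)
  case (Suc n)
  have "(of_nat r :: rat) \<noteq> 0" using Suc by simp
  then show ?thesis using Suc by (simp add: M4_def fact_reduce[of r] mult.assoc[symmetric] mult.commute[of _ "of_nat r"])
qed simp

lemma M4_pascal:
  assumes "j + p + q + r > 0"
  shows "M4 j p q r = (if j = 0 then 0 else M4 (j-1) p q r) + (if p = 0 then 0 else M4 j (p-1) q r)
     + (if q = 0 then 0 else M4 j p (q-1) r) + (if r = 0 then 0 else M4 j p q (r-1))"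
proof -
  obtain m where m: "j + p + q + r = Suc m" using assms by (cases "j+p+q+r") auto
  then have m': "j + (p + (q + r)) = Suc m" by simp
  have s: "(of_nat j + of_nat p + of_nat q + of_nat r :: rat) = of_nat (Suc m)"
    using m by (metis of_nat_add)
  have "M4 j p q r = (of_nat j + of_nat p + of_nat q + of_nat r) * fact m / (fact j * fact p * fact q * fact r)"
    unfolding s by (simp add: M4_def m)
  then show ?thesis unfolding M4_dec1 M4_dec2 M4_dec3 M4_dec4 m diff_Suc_1
    by (simp add: add_divide_distrib[symmetric] algebra_simps)
qed

definition tau :: "nat \<Rightarrow> nat \<Rightarrow> nat \<Rightarrow> nat \<Rightarrow> rat" where
  "tau a b c j = (if j \<le> a \<and> j \<le> b \<and> j \<le> c then (-4)^j * M4 j (a-j) (b-j) (c-j) else 0)"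
definition EE :: arr where "EE a b c = (\<Sum>j\<le>a. tau a b c j)"

lemma EE_ext: "a \<le> n \<Longrightarrow> EE a b c = (\<Sum>j\<le>n. tau a b c j)"
  unfolding EE_def by (rule sum.mono_neutral_left) (auto simp: tau_def)

lemma EE_B1: "B1 EE a b c = (\<Sum>j\<le>a. if j \<le> a \<and> j \<le> b \<and> j \<le> c \<and> 0 < a - j then (-4)^j * M4 j (a-j-1) (b-j) (c-j) else 0)"
proof (cases a)
  case 0 then show ?thesis by (simp add: B1_def)
next
  case (Suc a')
  have "B1 EE a b c = EE a' b c" using Suc by (simp add: B1_def)
  also have "\<dots> = (\<Sum>j\<le>a. tau a' b c j)" by (rule EE_ext) (simp add: Suc)
  also have "\<dots> = (\<Sum>j\<le>a. if j \<le> a \<and> j \<le> b \<and> j \<le> c \<and> 0 < a - j then (-4)^j * M4 j (a-j-1) (b-j) (c-j) else 0)"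
    by (rule sum.cong) (auto simp: tau_def Suc)
  finally show ?thesis .
qed

lemma EE_B2: "B2 EE a b c = (\<Sum>j\<le>a. if j \<le> a \<and> j \<le> b \<and> j \<le> c \<and> 0 < b - j then (-4)^j * M4 j (a-j) (b-j-1) (c-j) else 0)"
proof (cases b)
  case 0 then show ?thesis by (simp add: B2_def)
next
  case (Suc b')
  have "B2 EE a b c = (\<Sum>j\<le>a. tau a b' c j)" using Suc by (simp add: B2_def EE_def)
  also have "\<dots> = (\<Sum>j\<le>a. if j \<le> a \<and> j \<le> b \<and> j \<le> c \<and> 0 < b - j then (-4)^j * M4 j (a-j) (b-j-1) (c-j) else 0)"
    by (rule sum.cong) (auto simp: tau_def Suc)
  finally show ?thesis .
qed

lemma EE_B3: "B3 EE a b c = (\<Sum>j\<le>a. if j \<le> a \<and> j \<le> b \<and> j \<le> c \<and> 0 < c - j then (-4)^j * M4 j (a-j) (b-j) (c-j-1) else 0)"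
proof (cases c)
  case 0 then show ?thesis by (simp add: B3_def)
next
  case (Suc c')
  have "B3 EE a b c = (\<Sum>j\<le>a. tau a b c' j)" using Suc by (simp add: B3_def EE_def)
  also have "\<dots> = (\<Sum>j\<le>a. if j \<le> a \<and> j \<le> b \<and> j \<le> c \<and> 0 < c - j then (-4)^j * M4 j (a-j) (b-j) (c-j-1) else 0)"
    by (rule sum.cong) (auto simp: tau_def Suc)
  finally show ?thesis .
qed

lemma EE_B123: "4 * B1 (B2 (B3 EE)) a b c = (\<Sum>j\<le>a. if 0 < j \<and> j \<le> a \<and> j \<le> b \<and> j \<le> c then - ((-4)^j * M4 (j-1) (a-j) (b-j) (c-j)) else 0)"
proof (cases "a = 0 \<or> b = 0 \<or> c = 0")
  case True
  then have "B1 (B2 (B3 EE)) a b c = 0" by (auto simp: B1_def B2_def B3_def)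
  moreover have "(\<Sum>j\<le>a. if 0 < j \<and> j \<le> a \<and> j \<le> b \<and> j \<le> c then - ((-4)^j * M4 (j-1) (a-j) (b-j) (c-j)) else 0) = 0"
    using True by (intro sum.neutral) auto
  ultimately show ?thesis by simp
next
  case False
  then obtain a' b' c' where abc: "a = Suc a'" "b = Suc b'" "c = Suc c'" by (metis not0_implies_Suc)
  have "4 * B1 (B2 (B3 EE)) a b c = (\<Sum>j\<le>a'. 4 * tau a' b' c' j)"
    by (simp add: abc B1_def B2_def B3_def EE_def sum_distrib_left)
  also have "\<dots> = (\<Sum>j\<le>a'. (\<lambda>j. if 0 < j \<and> j \<le> a \<and> j \<le> b \<and> j \<le> c then - ((-4)^j * M4 (j-1) (a-j) (b-j) (c-j)) else 0) (Suc j))"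
    by (rule sum.cong) (auto simp: tau_def abc)
  also have "\<dots> = (\<Sum>j\<le>a. if 0 < j \<and> j \<le> a \<and> j \<le> b \<and> j \<le> c then - ((-4)^j * M4 (j-1) (a-j) (b-j) (c-j)) else 0)"
    unfolding abc(1) sum.atMost_Suc_shift by simp
  finally show ?thesis .
qed

lemma EE_rec: "EE a b c - B1 EE a b c - B2 EE a b c - B3 EE a b c + 4 * B1 (B2 (B3 EE)) a b c = delta a b c"
proof -
  have "EE a b c - B1 EE a b c - B2 EE a b c - B3 EE a b c + 4 * B1 (B2 (B3 EE)) a b c
    = (\<Sum>j\<le>a. if j \<le> a \<and> j \<le> b \<and> j \<le> c then (-4)^j * (if j = 0 \<and> a = 0 \<and> b = 0 \<and> c = 0 then 1 else 0) else 0)"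
    unfolding EE_B1 EE_B2 EE_B3 EE_B123 EE_def sum_subtractf[symmetric] sum.distrib[symmetric]
  proof (rule sum.cong[OF refl])
    fix j assume "j \<in> {..a}"
    show "tau a b c j - (if j \<le> a \<and> j \<le> b \<and> j \<le> c \<and> 0 < a - j then (-4)^j * M4 j (a-j-1) (b-j) (c-j) else 0)
        - (if j \<le> a \<and> j \<le> b \<and> j \<le> c \<and> 0 < b - j then (-4)^j * M4 j (a-j) (b-j-1) (c-j) else 0)
        - (if j \<le> a \<and> j \<le> b \<and> j \<le> c \<and> 0 < c - j then (-4)^j * M4 j (a-j) (b-j) (c-j-1) else 0)
        + (if 0 < j \<and> j \<le> a \<and> j \<le> b \<and> j \<le> c then - ((-4)^j * M4 (j-1) (a-j) (b-j) (c-j)) else 0)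
        = (if j \<le> a \<and> j \<le> b \<and> j \<le> c then (-4)^j * (if j = 0 \<and> a = 0 \<and> b = 0 \<and> c = 0 then 1 else 0) else 0)"
    proof (cases "j \<le> a \<and> j \<le> b \<and> j \<le> c")
      case False then show ?thesis by (auto simp: tau_def)
    next
      case True
      show ?thesis
      proof (cases "j + (a-j) + (b-j) + (c-j) = 0")
        case True
        then show ?thesis by (auto simp: tau_def M4_def)
      next
        case False
        have P: "M4 j (a-j) (b-j) (c-j) = (if j = 0 then 0 else M4 (j-1) (a-j) (b-j) (c-j)) + (if a-j = 0 then 0 else M4 j (a-j-1) (b-j) (c-j))
           + (if b-j = 0 then 0 else M4 j (a-j) (b-j-1) (c-j)) + (if c-j = 0 then 0 else M4 j (a-j) (b-j) (c-j-1))"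
          by (intro M4_pascal) (metis False gr0I)
        have nz: "\<not> (j = 0 \<and> a = 0 \<and> b = 0 \<and> c = 0)" using False by auto
        show ?thesis using True nz unfolding tau_def P by (auto simp: algebra_simps)
      qed
    qed
  qed
  also have "\<dots> = (\<Sum>j\<le>a. if j = 0 then delta a b c else 0)"
    by (rule sum.cong) (auto simp: delta_def)
  also have "\<dots> = delta a b c" by simp
  finally show ?thesis .
qed


definition tE :: "nat \<Rightarrow> nat \<Rightarrow> rat" where
  "tE n i = (if i \<le> n then (-4)^(n-i) * fact (n+2*i) / (fact (n-i) * fact i ^ 3) else 0)"
definition uE :: "nat \<Rightarrow> nat \<Rightarrow> rat" where
  "uE n i = (-4)^(n+2-i) / 16 * fact (n+2*i) / (fact i ^ 3 * fact (n+2-i))"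
definition HE :: "nat \<Rightarrow> nat \<Rightarrow> rat" where
  "HE n i = (if i \<le> n+2 then -48 * (3 * of_nat n + 5) * of_nat i ^ 3 * uE n i else 0)"

lemma fact_add1: "(fact (x+1) :: rat) = (of_nat x + 1) * fact x" by (simp add: algebra_simps)
lemma fact_add2: "(fact (x+2) :: rat) = (of_nat x + 2) * (of_nat x + 1) * fact x"
proof -
  have "x + 2 = Suc (Suc x)" by simp
  then show ?thesis by (simp only: fact_Suc) (simp add: algebra_simps)
qed


lemma cancel_aux: "(a::rat) \<noteq> 0 \<Longrightarrow> a * (X / (Y * (a * Z))) = X / (Y * Z)"
  by (simp add: field_simps)

lemma pow4: "((-4::rat))^(m+2) / 16 = (-4)^m" "((-4::rat))^(m+1) = -4 * (-4)^m"
  by (simp_all add: power_add)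

lemma E0: assumes "i \<le> n+2" shows "tE n i = of_nat (n+2-i) * (of_nat (n+2-i) - 1) * uE n i"
proof (cases "i \<le> n")
  case True
  then obtain m where n: "n = i + m" by (metis le_add_diff_inverse)
  have a: "n + 2 - i = m + 2" "n - i = m" using n by auto
  have u: "uE n i = (-4)^m * fact (n+2*i) / (fact i ^ 3 * ((of_nat m + 2) * (of_nat m + 1) * fact m))"
    unfolding uE_def a fact_add2 pow4 by simp
  have c: "(of_nat (m+2) :: rat) * (of_nat (m+2) - 1) = (of_nat m + 2) * (of_nat m + 1)" by (simp add: algebra_simps)
  have "of_nat (n+2-i) * (of_nat (n+2-i) - 1) * uE n i = (-4)^m * fact (n+2*i) / (fact i ^ 3 * fact m)"
    unfolding a c u by (rule cancel_aux) simp
  then show ?thesis unfolding tE_def a using True by (simp add: mult.commute)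
next
  case False
  then have "n + 2 - i = 0 \<or> n + 2 - i = 1" using assms by linarith
  then show ?thesis using False by (auto simp: tE_def)
qed

lemma aux1: "(a::rat) \<noteq> 0 \<Longrightarrow> -4 * c * a * (P / 16 * F / (Y * (a * Z))) = c * (-4 * P / 16) * F / (Y * Z)"
  by (simp add: field_simps)

lemma pow4b: "-4 * ((-4::rat))^(m+1) / 16 = (-4)^m" by (simp add: power_add)

lemma E1: assumes "i \<le> n+2" shows "tE (n+1) i = -4 * (of_nat n + 2 * of_nat i + 1) * of_nat (n+2-i) * uE n i"
proof (cases "i \<le> n+1")
  case True
  then obtain m where n: "n + 1 = i + m" by (metis le_add_diff_inverse)
  have a: "n + 2 - i = m + 1" "n + 1 - i = m" using n by auto
  have f: "fact (n + 1 + 2*i) = (of_nat n + 2 * of_nat i + 1) * (fact (n + 2*i) :: rat)"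
    using fact_add1[of "n+2*i"] by (simp add: algebra_simps)
  have u: "uE n i = (-4)^(m+1) / 16 * fact (n+2*i) / (fact i ^ 3 * ((of_nat m + 1) * fact m))"
    unfolding uE_def a fact_add1 by simp
  have "-4 * (of_nat n + 2 * of_nat i + 1) * of_nat (n+2-i) * uE n i
      = (of_nat n + 2 * of_nat i + 1) * (-4)^m * fact (n+2*i) / (fact i ^ 3 * fact m)"
    unfolding u a of_nat_add of_nat_1 by (subst aux1) (simp_all add: pow4b)
  then show ?thesis unfolding tE_def a f using True by (simp add: field_simps)
next
  case False
  then have "n + 2 - i = 0" using assms by linarith
  then show ?thesis using False by (auto simp: tE_def)
qed

lemma E2: assumes "i \<le> n+2" shows "tE (n+2) i = 16 * (of_nat n + 2 * of_nat i + 1) * (of_nat n + 2 * of_nat i + 2) * uE n i"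
proof -
  have f: "fact (n + 2 + 2*i) = (of_nat n + 2 * of_nat i + 2) * (of_nat n + 2 * of_nat i + 1) * (fact (n + 2*i) :: rat)"
    using fact_add2[of "n+2*i"] by (simp add: algebra_simps)
  have a: "n + 2 - i = m + 2" if "n = i + m" for m using that by simp
  obtain m where m: "n + 2 - i = m" by simp
  have "tE (n+2) i = (-4)^m * ((of_nat n + 2 * of_nat i + 2) * (of_nat n + 2 * of_nat i + 1) * fact (n + 2*i)) / (fact m * fact i ^ 3)"
    unfolding tE_def using assms m by (simp add: f) (simp add: algebra_simps)
  also have "\<dots> = 16 * (of_nat n + 2 * of_nat i + 1) * (of_nat n + 2 * of_nat i + 2) * uE n i"
    unfolding uE_def m by (simp add: field_simps)
  finally show ?thesis .
qed

lemma aux3: "(a::rat) \<noteq> 0 \<Longrightarrow> -48 * k * a^3 * (P / 16 * (d * (d' * F)) / ((a * Y)^3 * Z)) = 12 * k * d' * d * (-4 * P / 16) * F / (Y ^ 3 * Z)"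
  by (simp add: field_simps)

lemma aux4: "(a::rat) \<noteq> 0 \<Longrightarrow> X * a * (P / 16 * F / (Y * (a * Z))) = X * (P / 16) * F / (Y * Z)"
  by (simp add: field_simps)
lemma pow4c: "((-4::rat))^(m+1) = -4 * (-4)^m" by simp

lemma EH1: assumes "i \<le> n+2" shows "HE n (Suc i) = 12 * (3 * of_nat n + 5) * (of_nat n + 2 * of_nat i + 1) * (of_nat n + 2 * of_nat i + 2) * of_nat (n+2-i) * uE n i"
proof (cases "i \<le> n+1")
  case True
  then obtain m where n: "n + 1 = i + m" by (metis le_add_diff_inverse)
  have a: "n + 2 - i = m + 1" "n + 2 - Suc i = m" using n by auto
  have f: "fact (n + 2 * Suc i) = (of_nat n + 2 * of_nat i + 2) * ((of_nat n + 2 * of_nat i + 1) * (fact (n + 2*i) :: rat))"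
    using fact_add2[of "n+2*i"] by (simp add: algebra_simps)
  have fi: "(fact (Suc i) :: rat) = of_nat (Suc i) * fact i" by simp
  have "HE n (Suc i) = -48 * (3 * of_nat n + 5) * of_nat (Suc i) ^ 3 * ((-4)^m / 16 * fact (n + 2 * Suc i) / ((of_nat (Suc i) * fact i)^3 * fact m))"
    unfolding HE_def uE_def a using True by (simp only: fi) simp
  also have "\<dots> = 12 * (3 * of_nat n + 5) * (of_nat n + 2 * of_nat i + 1) * (of_nat n + 2 * of_nat i + 2) * (-4 * (-4)^m / 16) * fact (n+2*i) / (fact i ^ 3 * fact m)"
    unfolding f by (rule aux3) simp
  also have "\<dots> = 12 * (3 * of_nat n + 5) * (of_nat n + 2 * of_nat i + 1) * (of_nat n + 2 * of_nat i + 2) * of_nat (n+2-i) * uE n i"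
    unfolding uE_def a fact_add1 pow4c of_nat_add of_nat_1 by (subst aux4) simp_all
  finally show ?thesis .
next
  case False
  then have "n + 2 - i = 0" "\<not> Suc i \<le> n + 2" using assms by linarith+
  then show ?thesis by (simp add: HE_def)
qed

lemma E_point: "(of_nat n + 2)^2 * tE (n+2) i - (7 * of_nat n ^ 2 + 21 * of_nat n + 16) * tE (n+1) i
    - 8 * (of_nat n + 1)^2 * tE n i = HE n (Suc i) - HE n i"
proof (cases "i \<le> n + 2")
  case True
  have x: "(of_nat (n+2-i)::rat) = of_nat n + 2 - of_nat i" using True by (simp add: of_nat_diff)
  have h: "HE n i = -48 * (3 * of_nat n + 5) * of_nat i ^ 3 * uE n i" using True by (simp add: HE_def)
  show ?thesis unfolding E0[OF True] E1[OF True] E2[OF True] EH1[OF True] h x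
    by (simp add: algebra_simps power2_eq_square power3_eq_cube)
next
  case False
  then show ?thesis by (simp add: tE_def HE_def)
qed

definition sE :: "nat \<Rightarrow> rat" where "sE n = (\<Sum>i\<le>n. tE n i)"

lemma sE_ext: "n \<le> N \<Longrightarrow> sE n = (\<Sum>i<Suc N. tE n i)"
  unfolding sE_def lessThan_Suc_atMost by (rule sum.mono_neutral_left) (auto simp: tE_def)

lemma sE_rec: "(of_nat n + 2)^2 * sE (n+2) = (7 * of_nat n ^ 2 + 21 * of_nat n + 16) * sE (n+1) + 8 * (of_nat n + 1)^2 * sE n"
proof -
  have "(\<Sum>i<Suc (n+2). (of_nat n + 2)^2 * tE (n+2) i - (7 * of_nat n ^ 2 + 21 * of_nat n + 16) * tE (n+1) i
    - 8 * (of_nat n + 1)^2 * tE n i) = HE n (Suc (n+2)) - HE n 0"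
    unfolding E_point by (rule sum_lessThan_telescope)
  also have "\<dots> = 0" by (simp add: HE_def)
  finally have z: "(\<Sum>i<Suc (n+2). (of_nat n + 2)^2 * tE (n+2) i - (7 * of_nat n ^ 2 + 21 * of_nat n + 16) * tE (n+1) i
    - 8 * (of_nat n + 1)^2 * tE n i) = 0" .
  have "(\<Sum>i<Suc (n+2). (of_nat n + 2)^2 * tE (n+2) i - (7 * of_nat n ^ 2 + 21 * of_nat n + 16) * tE (n+1) i
    - 8 * (of_nat n + 1)^2 * tE n i) = (of_nat n + 2)^2 * (\<Sum>i<Suc (n+2). tE (n+2) i) - (7 * of_nat n ^ 2 + 21 * of_nat n + 16) * (\<Sum>i<Suc (n+2). tE (n+1) i)
    - 8 * (of_nat n + 1)^2 * (\<Sum>i<Suc (n+2). tE n i)"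
    by (simp only: sum_subtractf sum_distrib_left)
  also have "\<dots> = (of_nat n + 2)^2 * sE (n+2) - (7 * of_nat n ^ 2 + 21 * of_nat n + 16) * sE (n+1) - 8 * (of_nat n + 1)^2 * sE n"
    by (simp only: sE_ext[of "n+2" "n+2", symmetric] sE_ext[of "n+1" "n+2", symmetric] sE_ext[of n "n+2", symmetric] le_refl le_add1 le_add2 add_le_mono1)
  finally have "(of_nat n + 2)^2 * sE (n+2) - (7 * of_nat n ^ 2 + 21 * of_nat n + 16) * sE (n+1) - 8 * (of_nat n + 1)^2 * sE n = 0"
    using z by simp
  then show ?thesis by simp
qed

definition QF :: "nat \<Rightarrow> nat \<Rightarrow> rat" where
  "QF n k = -(14 * of_nat n ^ 3 + 74 * of_nat n ^ 2 + 128 * of_nat n + 72) + (27 * of_nat n ^ 2 + 93 * of_nat n + 78) * of_nat k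
     - (18 * of_nat n + 30) * of_nat k ^ 2 + 4 * of_nat k ^ 3"
definition tF :: "nat \<Rightarrow> nat \<Rightarrow> rat" where "tF n k = of_nat (n choose k) ^ 3"
definition HF :: "nat \<Rightarrow> nat \<Rightarrow> rat" where
  "HF n k = QF n k * (of_nat k * of_nat ((n+2) choose k)) ^ 3 / ((of_nat n + 2) ^ 3 * (of_nat n + 1))"

lemma hcancel: "(a::rat) \<noteq> 0 \<Longrightarrow> b \<noteq> 0 \<Longrightarrow> R * (k * (a * b * w)) ^ 3 / (a ^ 3 * b) = R * k ^ 3 * b ^ 2 * w ^ 3"
  by (simp add: field_simps power_mult_distrib power2_eq_square power3_eq_cube)

lemma F_point: "(of_nat n + 2)^2 * tF (n+2) k - (7 * of_nat n ^ 2 + 21 * of_nat n + 16) * tF (n+1) k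
    - 8 * (of_nat n + 1)^2 * tF n k = HF n (Suc k) - HF n k"
proof (cases "k \<le> n + 2")
  case True
  define B :: rat where "B = of_nat ((n+2) choose k)"
  define m :: rat where "m = of_nat n + 2 - of_nat k"
  have mm: "(of_nat (n+2-k) :: rat) = m" using True by (simp add: m_def of_nat_diff)
  have c1: "(of_nat ((n+1) choose k) :: rat) = m * B / (of_nat n + 2)"
  proof -
    have "(n+2-k) * ((n+2) choose k) = (n+2) * ((n+1) choose k)"
      using binomial_absorb_comp[of "n+2" k] by simp
    then have "(of_nat (n+2-k) :: rat) * B = (of_nat n + 2) * of_nat ((n+1) choose k)"
      unfolding B_def by (metis (mono_tags, lifting) of_nat_add of_nat_mult numeral_Bit0 of_nat_numeral one_add_one)
    then show ?thesis unfolding mm by (simp add: field_simps)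
  qed
  have c0: "(of_nat (n choose k) :: rat) = of_nat ((n+1) choose k) * (m - 1) / (of_nat n + 1)"
  proof (cases "k \<le> n + 1")
    case True
    have "(n+1-k) * ((n+1) choose k) = (n+1) * (n choose k)"
      using binomial_absorb_comp[of "n+1" k] by simp
    then have "(of_nat (n+1-k) :: rat) * of_nat ((n+1) choose k) = (of_nat n + 1) * of_nat (n choose k)"
      by (metis of_nat_Suc of_nat_mult Suc_eq_plus1 add.commute)
    moreover have "(of_nat (n+1-k) :: rat) = m - 1" using True by (simp add: m_def of_nat_diff)
    ultimately have e1: "(m - 1) * of_nat ((n+1) choose k) = (of_nat n + 1) * (of_nat (n choose k) :: rat)" by simp
    have "(of_nat (n choose k) :: rat) = ((of_nat n + 1) * of_nat (n choose k)) / (of_nat n + 1)"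
      by (simp add: field_simps)
    also have "\<dots> = (m - 1) * of_nat ((n+1) choose k) / (of_nat n + 1)" by (simp only: e1)
    finally show ?thesis by (simp add: mult.commute)
  next
    case False
    then show ?thesis by (simp add: binomial_eq_0)
  qed
  have ch: "(of_nat (Suc k) * of_nat ((n+2) choose Suc k) :: rat) = m * B"
  proof -
    have "Suc k * ((n+2) choose Suc k) = (n+2) * ((n+1) choose k)"
      using binomial_absorption[of k "n+2"] by simp
    also have "\<dots> = (n+2-k) * ((n+2) choose k)"
      using binomial_absorb_comp[of "n+2" k] by simp
    finally have "(of_nat (Suc k * ((n+2) choose Suc k)) :: rat) = of_nat ((n+2-k) * ((n+2) choose k))" by simp
    then show ?thesis unfolding of_nat_mult mm B_def .
  qed
  have k: "(of_nat k :: rat) = of_nat n + 2 - m" by (simp add: m_def)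
  define w where "w = B / ((of_nat n + 2) * (of_nat n + 1))"
  have nz: "(of_nat n + 2) * (of_nat n + 1) \<noteq> (0::rat)" by (simp add: add_pos_pos)
  have Bw: "B = (of_nat n + 2) * (of_nat n + 1) * w" unfolding w_def using nz by simp
  have c1': "(of_nat ((n+1) choose k) :: rat) = m * (of_nat n + 1) * w"
    unfolding c1 Bw by (simp add: field_simps)
  have c0': "(of_nat (n choose k) :: rat) = m * (m - 1) * w"
    unfolding c0 c1' by (simp add: field_simps)
  have h0: "HF n k = QF n k * of_nat k ^ 3 * (of_nat n + 1)^2 * w^3"
    unfolding HF_def B_def[symmetric] Bw by (rule hcancel) (simp_all add: add_pos_pos)
  have h1: "HF n (Suc k) = QF n (Suc k) * m ^ 3 * (of_nat n + 1)^2 * w^3"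
    unfolding HF_def ch Bw by (rule hcancel) (simp_all add: add_pos_pos)
  have t2: "tF (n+2) k = ((of_nat n + 2) * (of_nat n + 1) * w)^3" unfolding tF_def B_def[symmetric] Bw ..
  show ?thesis
    unfolding h0 h1 tF_def c1' c0' B_def[symmetric] Bw QF_def of_nat_Suc k
    by algebra
next
  case False
  then show ?thesis by (simp add: tF_def HF_def binomial_eq_0)
qed


definition sF :: "nat \<Rightarrow> rat" where "sF n = (\<Sum>k\<le>n. tF n k)"

lemma sF_ext: "n \<le> N \<Longrightarrow> sF n = (\<Sum>i<Suc N. tF n i)"
  unfolding sF_def lessThan_Suc_atMost by (rule sum.mono_neutral_left) (auto simp: tF_def binomial_eq_0)

lemma sF_rec: "(of_nat n + 2)^2 * sF (n+2) = (7 * of_nat n ^ 2 + 21 * of_nat n + 16) * sF (n+1) + 8 * (of_nat n + 1)^2 * sF n"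
proof -
  have "(\<Sum>i<Suc (n+2). (of_nat n + 2)^2 * tF (n+2) i - (7 * of_nat n ^ 2 + 21 * of_nat n + 16) * tF (n+1) i
    - 8 * (of_nat n + 1)^2 * tF n i) = HF n (Suc (n+2)) - HF n 0"
    unfolding F_point by (rule sum_lessThan_telescope)
  also have "\<dots> = 0" by (simp add: HF_def binomial_eq_0)
  finally have z: "(\<Sum>i<Suc (n+2). (of_nat n + 2)^2 * tF (n+2) i - (7 * of_nat n ^ 2 + 21 * of_nat n + 16) * tF (n+1) i
    - 8 * (of_nat n + 1)^2 * tF n i) = 0" .
  have "(\<Sum>i<Suc (n+2). (of_nat n + 2)^2 * tF (n+2) i - (7 * of_nat n ^ 2 + 21 * of_nat n + 16) * tF (n+1) i
    - 8 * (of_nat n + 1)^2 * tF n i) = (of_nat n + 2)^2 * (\<Sum>i<Suc (n+2). tF (n+2) i) - (7 * of_nat n ^ 2 + 21 * of_nat n + 16) * (\<Sum>i<Suc (n+2). tF (n+1) i)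
    - 8 * (of_nat n + 1)^2 * (\<Sum>i<Suc (n+2). tF n i)"
    by (simp only: sum_subtractf sum_distrib_left)
  also have "\<dots> = (of_nat n + 2)^2 * sF (n+2) - (7 * of_nat n ^ 2 + 21 * of_nat n + 16) * sF (n+1) - 8 * (of_nat n + 1)^2 * sF n"
    by (simp only: sF_ext[of "n+2" "n+2", symmetric] sF_ext[of "n+1" "n+2", symmetric] sF_ext[of n "n+2", symmetric] le_refl le_add1 le_add2 add_le_mono1)
  finally have "(of_nat n + 2)^2 * sF (n+2) - (7 * of_nat n ^ 2 + 21 * of_nat n + 16) * sF (n+1) - 8 * (of_nat n + 1)^2 * sF n = 0"
    using z by simp
  then show ?thesis by simp
qed

lemma sE_sF: "sE n = sF n"
proof (induction n rule: nat_less_induct)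
  case (1 n)
  show ?case
  proof (cases n)
    case 0 then show ?thesis by (simp add: sE_def sF_def tE_def tF_def)
  next
    case (Suc n1)
    show ?thesis
    proof (cases n1)
      case 0 then show ?thesis using Suc by (simp add: sE_def sF_def tE_def tF_def)
    next
      case (Suc n0)
      have n: "n = n0 + 2" using \<open>n = Suc n1\<close> Suc by simp
      have e1: "sE (n0+1) = sF (n0+1)" using 1 n by simp
      have e0: "sE n0 = sF n0" using 1 n by simp
      have nz: "(of_nat n0 + 2 :: rat)^2 \<noteq> 0" by simp
      have "(of_nat n0 + 2)^2 * sE (n0+2) = (of_nat n0 + 2)^2 * sF (n0+2)"
        using sE_rec[of n0] sF_rec[of n0] e1 e0 by simp
      then show ?thesis using nz n by simp
    qed
  qed
qed

lemma EE_diag: "EE n n n = sE n"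
proof -
  have "EE n n n = (\<Sum>j=0..n. tau n n n j)" by (simp add: EE_def atLeast0AtMost)
  also have "\<dots> = (\<Sum>i=0..n. tau n n n (n + 0 - i))" by (rule sum.atLeastAtMost_rev)
  also have "\<dots> = (\<Sum>i=0..n. tE n i)"
  proof (rule sum.cong[OF refl])
    fix i assume "i \<in> {0..n}"
    then have i: "i \<le> n" by simp
    have a: "n - (n - i) = i" "n - i + i + i + i = n + 2 * i" using i by auto
    have b: "n + i + i = n + i * 2" by simp
    show "tau n n n (n + 0 - i) = tE n i"
      using i by (simp add: tau_def tE_def M4_def a b power3_eq_cube mult_ac)
  qed
  also have "\<dots> = sE n" by (simp add: sE_def atLeast0AtMost)
  finally show ?thesis .
qed


theorem mainTheorem8:
  shows "(\<forall>n::nat. of_nat (\<Sum>k=0..n. (n choose k) ^ 3) = coeff3 franel_gf n n n) \<and>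
         (\<forall>n1 n2 n3::nat. coeff3 franel_gf n1 n2 n3 =
             coeff3 ((X1 - X2 - X3) ^ n1 * (X2 - X1 - X3) ^ n2 * (X3 - X1 - X2) ^ n3) n1 n2 n3)"
proof (intro conjI allI)
  have G1: "mk3 (T1 (T2 (T3 gg))) = franel_gf"
    by (rule rec_to_gf, rule main_rec[of gg, OF gg_rec])
  have G2: "mk3 EE = franel_gf" by (rule rec_to_gf, rule EE_rec)
  fix n :: nat
  have "coeff3 franel_gf n n n = sF n"
    unfolding G2[symmetric] coeff3_mk3 EE_diag sE_sF ..
  also have "\<dots> = of_nat (\<Sum>k=0..n. (n choose k) ^ 3)"
    by (simp add: sF_def tF_def atLeast0AtMost)
  finally show "of_nat (\<Sum>k=0..n. (n choose k) ^ 3) = coeff3 franel_gf n n n" ..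
next
  have G1: "mk3 (T1 (T2 (T3 gg))) = franel_gf"
    by (rule rec_to_gf, rule main_rec[of gg, OF gg_rec])
  fix n1 n2 n3 :: nat
  show "coeff3 franel_gf n1 n2 n3 =
             coeff3 ((X1 - X2 - X3) ^ n1 * (X2 - X1 - X3) ^ n2 * (X3 - X1 - X2) ^ n3) n1 n2 n3"
    unfolding coeffP G1[symmetric] coeff3_mk3 ..
qed


end
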